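(* For $1\le i\le n$ let $f_i:\mathbb{R}\to\mathbb{R}$ be a convex function that is bounded below, let $a_1,\dots,a_n\ge 0$, and define $g:\mathbb{Z}^n\to\mathbb{R}$ by $g(\vec y)=\sum_{i=1}^n a_if_i(y_i)$. Then $(\mathbb{Z}^n,g)$ is an Ameso($0$) pair.
   Context: Floors and ceilings of vectors are taken componentwise. A set $D^n\subseteq\mathbb{Z}^n$ is an Ameso set if $\lceil(\vec x+\vec y)/2\rceil,\lfloor(\vec x+\vec y)/2\rfloor\in D^n$ for all $\vec x,\vec y\in D^n$. For $C\ge 0$, $(D^n,f)$ is an Ameso($C$) pair if $D^n$ is an Ameso set, $f:D^n\to\mathbb{R}$ is bounded below, and $f(\vec x)+f(\vec y)+C\ge f(\lceil(\vec x+\vec y)/2\rceil)+f(\lfloor(\vec x+\vec y)/2\rfloor)$ for all $\vec x,\vec y\in D^n$. *)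

theory Defs
  imports "HOL-Analysis.Analysis"
begin

definition mid_ceil :: "int ^ 'n \<Rightarrow> int ^ 'n \<Rightarrow> int ^ 'n" where
  "mid_ceil x y = (\<chi> i. \<lceil>(real_of_int (x $ i) + real_of_int (y $ i)) / 2\<rceil>)"

definition mid_floor :: "int ^ 'n \<Rightarrow> int ^ 'n \<Rightarrow> int ^ 'n" where
  "mid_floor x y = (\<chi> i. \<lfloor>(real_of_int (x $ i) + real_of_int (y $ i)) / 2\<rfloor>)"

definition ameso_set :: "(int ^ 'n) set \<Rightarrow> bool" where
  "ameso_set D \<longleftrightarrow> (\<forall>x\<in>D. \<forall>y\<in>D. mid_ceil x y \<in> D \<and> mid_floor x y \<in> D)"

definition ameso_pair :: "real \<Rightarrow> (int ^ 'n) set \<Rightarrow> (int ^ 'n \<Rightarrow> real) \<Rightarrow> bool" where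
  "ameso_pair C D f \<longleftrightarrow> ameso_set D \<and> bdd_below (f ` D) \<and>
     (\<forall>x\<in>D. \<forall>y\<in>D. f x + f y + C \<ge> f (mid_ceil x y) + f (mid_floor x y))"

end

theory Submission
  imports Defs
begin

lemma conv_pair:
  fixes h :: "real \<Rightarrow> real"
  assumes c: "convex_on UNIV h" and xy: "x \<le> y" and pq: "p + q = x + y"
    and p1: "x \<le> p" and p2: "p \<le> y"
  shows "h p + h q \<le> h x + h y"
proof (cases "x = y")
  case True
  then have "p = x" "q = x" using p1 p2 pq by auto
  then show ?thesis using True by simp
next
  case False
  define t where "t = (p - x) / (y - x)"
  have t0: "0 \<le> t" and t1: "t \<le> 1" using False xy p1 p2 by (auto simp: t_def field_simps)
  have tt: "t * (y - x) = p - x" using False by (simp add: t_def)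
  have ep: "p = (1 - t) *\<^sub>R x + t *\<^sub>R y" using tt by (simp add: algebra_simps)
  have eq: "q = (1 - (1 - t)) *\<^sub>R x + (1 - t) *\<^sub>R y" using tt pq by (simp add: algebra_simps)
  have "h p \<le> (1 - t) * h x + t * h y"
    unfolding ep by (rule convex_onD[OF c t0 t1]) auto
  moreover have "h q \<le> (1 - (1 - t)) * h x + (1 - t) * h y"
    unfolding eq by (rule convex_onD[OF c]) (use t0 t1 in auto)
  ultimately show ?thesis by (simp add: algebra_simps)
qed

lemma int_mid:
  fixes x y :: int
  shows "real_of_int \<lceil>(real_of_int x + real_of_int y) / 2\<rceil> + real_of_int \<lfloor>(real_of_int x + real_of_int y) / 2\<rfloor> = real_of_int x + real_of_int y"
    and "min x y \<le> \<lfloor>(real_of_int x + real_of_int y) / 2\<rfloor>"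
    and "\<lfloor>(real_of_int x + real_of_int y) / 2\<rfloor> \<le> max x y"
proof -
  have f: "\<lfloor>(real_of_int x + real_of_int y) / 2\<rfloor> = (x + y) div 2"
    by (metis floor_divide_of_int_eq of_int_add of_int_numeral)
  have c: "\<lceil>(real_of_int x + real_of_int y) / 2\<rceil> = - ((- (x + y)) div 2)"
  proof -
    have "\<lceil>(real_of_int x + real_of_int y) / 2\<rceil> = - \<lfloor>real_of_int (-(x+y)) / 2\<rfloor>"
    proof -
      have "- ((real_of_int x + real_of_int y) / 2) = real_of_int (-(x+y)) / 2" by (simp add: field_simps)
      then show ?thesis by (simp only: ceiling_def)
    qed
    also have "\<lfloor>real_of_int (-(x+y)) / 2\<rfloor> = (-(x+y)) div 2"
      by (metis floor_divide_of_int_eq of_int_numeral)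
    finally show ?thesis .
  qed
  have "- ((- (x + y)) div 2) + (x + y) div 2 = x + y" by presburger
  then show "real_of_int \<lceil>(real_of_int x + real_of_int y) / 2\<rceil> + real_of_int \<lfloor>(real_of_int x + real_of_int y) / 2\<rfloor> = real_of_int x + real_of_int y"
    unfolding f c by (metis of_int_add)
  show "min x y \<le> \<lfloor>(real_of_int x + real_of_int y) / 2\<rfloor>" unfolding f by linarith
  show "\<lfloor>(real_of_int x + real_of_int y) / 2\<rfloor> \<le> max x y" unfolding f by linarith
qed

lemma conv_int:
  fixes h :: "real \<Rightarrow> real" and x y :: int
  assumes c: "convex_on UNIV h"
  shows "h (real_of_int \<lceil>(real_of_int x + real_of_int y) / 2\<rceil>) + h (real_of_int \<lfloor>(real_of_int x + real_of_int y) / 2\<rfloor>) \<le> h x + h y"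
proof -
  note m = int_mid[of x y]
  show ?thesis
  proof (cases "x \<le> y")
    case True
    have "h (real_of_int \<lfloor>(real_of_int x + real_of_int y) / 2\<rfloor>) + h (real_of_int \<lceil>(real_of_int x + real_of_int y) / 2\<rceil>) \<le> h x + h y"
      by (rule conv_pair[OF c]) (use m True in auto)
    then show ?thesis by simp
  next
    case False
    have "h (real_of_int \<lfloor>(real_of_int x + real_of_int y) / 2\<rfloor>) + h (real_of_int \<lceil>(real_of_int x + real_of_int y) / 2\<rceil>) \<le> h y + h x"
      by (rule conv_pair[OF c]) (use m False in auto)
    then show ?thesis by simp
  qed
qed

theorem mainTheorem8:
  fixes f :: "'n::finite \<Rightarrow> real \<Rightarrow> real" and a :: "'n \<Rightarrow> real"
    and g :: "int ^ 'n \<Rightarrow> real"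
  assumes "\<And>i. convex_on UNIV (f i)"
    and "\<And>i. bdd_below (range (f i))"
    and "\<And>i. a i \<ge> 0"
    and "\<And>y. g y = (\<Sum>i\<in>UNIV. a i * f i (real_of_int (y $ i)))"
  shows "ameso_pair 0 UNIV g"
  unfolding ameso_pair_def ameso_set_def
proof (intro conjI ballI)
  obtain L where L: "\<And>i z. L i \<le> f i z"
    using assms(2) unfolding bdd_below_def by (metis rangeI)
  show "bdd_below (range g)"
  proof (rule bdd_belowI)
    fix v assume "v \<in> range g"
    then obtain y where v: "v = g y" by auto
    have "(\<Sum>i\<in>UNIV. a i * L i) \<le> (\<Sum>i\<in>UNIV. a i * f i (real_of_int (y $ i)))"
      by (rule sum_mono) (simp add: L assms(3) mult_left_mono)
    then show "(\<Sum>i\<in>UNIV. a i * L i) \<le> v" using v assms(4) by simp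
  qed
  fix x y :: "int ^ 'n"
  have "g (mid_ceil x y) + g (mid_floor x y) =
     (\<Sum>i\<in>UNIV. a i * (f i (real_of_int \<lceil>(real_of_int (x$i) + real_of_int (y$i)) / 2\<rceil>) + f i (real_of_int \<lfloor>(real_of_int (x$i) + real_of_int (y$i)) / 2\<rfloor>)))"
    by (simp add: assms(4) mid_ceil_def mid_floor_def sum.distrib[symmetric] algebra_simps)
  also have "\<dots> \<le> (\<Sum>i\<in>UNIV. a i * (f i (x$i) + f i (y$i)))"
    by (rule sum_mono, rule mult_left_mono[OF conv_int[OF assms(1)] assms(3)])
  also have "\<dots> = g x + g y"
    by (simp add: assms(4) sum.distrib[symmetric] algebra_simps)
  finally show "g (mid_ceil x y) + g (mid_floor x y) \<le> g x + g y + 0" by simp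
qed auto

end
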